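(* In the model and protocol $\mathrm{OciorABA}^*$ described in the context, let $j\in[1:n]$ be such that $\mathrm{ABBA}_j$ delivers output $1$ at some honest node. Then there is a value $y^{(j)}_j$ that $\mathrm{RBC}_j$ eventually delivers at every honest node, and there exists an honest node $\mathrm{Node}_i$, $i\in[1:n]\setminus\mathcal F$, whose input message $w_i$ satisfies $\mathrm{Enc}_j(w_i)=y^{(j)}_j$.
   Context: Model: there are $n$ nodes $\mathrm{Node}_1,\dots,\mathrm{Node}_n$ in an asynchronous network (every message sent between honest nodes is eventually delivered, with arbitrary adversarial delay). An adaptive adversary may corrupt (make dishonest/Byzantine) at most $t$ nodes in total; $\mathcal F\subseteq[1:n]$ denotes the set of dishonest nodes; $n\ge 3t+1$. Primitives used as black boxes: (RBC) For each $j\in[1:n]$ there is a reliable broadcast instance $\mathrm{RBC}_j$ with leader $\mathrm{Node}_j$, satisfying: Consistency (if two honest nodes output $w',w''$ then $w'=w''$); Validity (if the leader is honest and inputs $w$, every honest node eventually outputs $w$); Totality (if one honest node outputs a value, every honest node eventually outputs a value). (ABBA) For each $j\in[1:n]$ there is a binary Byzantine agreement instance $\mathrm{ABBA}_j$ (inputs and outputs in $\{0,1\}$), satisfying: Termination (if all honest nodes provide inputs, every honest node eventually outputs a value and terminates); Consistency (if an honest node outputs $b$, every honest node eventually outputs $b$); Validity (if all honest nodes input the same $b$, every honest node eventually outputs $b$). (Erasure code) An $(n,t+1)$ erasure code over an alphabet $\Sigma$: an encoder $\mathrm{Enc}$ mapping a message $w$ to $(\mathrm{Enc}_1(w),\dots,\mathrm{Enc}_n(w))\in\Sigma^n$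 and a decoder $\mathrm{Dec}$ such that for every set $K\subseteq[1:n]$ with $|K|=t+1$, $\mathrm{Dec}(\{\mathrm{Enc}_j(w)\}_{j\in K})=w$. Protocol $\mathrm{OciorABA}^*$, code for an honest $\mathrm{Node}_i$ with input message $w_i$: (1) Compute $(y^{(i)}_1,\dots,y^{(i)}_n)=\mathrm{Enc}(w_i)$ and input $y^{(i)}_i$ into $\mathrm{RBC}_i$ (as leader). (2) Upon delivery of a value $y^{(j)}_j$ from $\mathrm{RBC}_j$ (after step (1) has been executed), if $\mathrm{Node}_i$ has not yet given an input to $\mathrm{ABBA}_j$: set $a_i[j]=1$ if $y^{(j)}_j=y^{(i)}_j$ and $a_i[j]=0$ otherwise, and input $a_i[j]$ into $\mathrm{ABBA}_j$. (3) Upon obtaining outputs from $n-t$ of the instances $\mathrm{ABBA}_1,\dots,\mathrm{ABBA}_n$, input $0$ into every $\mathrm{ABBA}_j$ to which $\mathrm{Node}_i$ has not yet given an input. (4) Upon obtaining outputs from all $n$ ABBA instances: let $S=\{j:\mathrm{ABBA}_j\text{ output }1\}$. If $|S|<t+1$, output a default value $\bot$ and terminate. Otherwise let $K$ be the set of the $t+1$ smallest elements of $S$, wait for delivery of $y^{(j)}_j$ from $\mathrm{RBC}_j$ for all $j\in K$, output $\mathrm{Dec}(\{y^{(j)}_j\}_{j\in K})$ and terminate. *)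

theory Defs
  imports Main
begin

text \<open>
Nodes are 1..n, time is discrete (nat),
and "eventually" means "at some finite time".  An execution is described by
  rbc_lin j          : the value the leader Node_j inputs into RBC_j (None = no input)
  rbc_del j i        : Some (tau, v) iff RBC_j delivers v at Node_i at time tau
  abba_inp j i       : Some (tau, b) iff Node_i inputs b into ABBA_j at time tau
  abba_out j i       : Some (tau, b) iff ABBA_j outputs b at Node_i at time tau
Each instance delivers / accepts at most one value per node.  Only honest
nodes (those in {1..n} - F) are constrained.
\<close>

definition honest :: "nat \<Rightarrow> nat set \<Rightarrow> nat set" where
  "honest n F = {1..n} - F"

text \<open>(n, t+1) erasure code: Enc_k(w) = enc w k.\<close>
definition erasure_code ::
  "nat \<Rightarrow> nat \<Rightarrow> ('m \<Rightarrow> nat \<Rightarrow> 's) \<Rightarrow> ((nat \<times> 's) set \<Rightarrow> 'm) \<Rightarrow> bool" where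
  "erasure_code n t enc dec \<longleftrightarrow>
     (\<forall>w K. K \<subseteq> {1..n} \<and> card K = t + 1 \<longrightarrow> dec ((\<lambda>k. (k, enc w k)) ` K) = w)"

definition rbc_props ::
  "nat \<Rightarrow> nat set \<Rightarrow> nat \<Rightarrow> ('v option) \<Rightarrow> (nat \<Rightarrow> (nat \<times> 'v) option) \<Rightarrow> bool" where
  "rbc_props n F j lin del \<longleftrightarrow>
     (\<forall>i\<in>honest n F. \<forall>i'\<in>honest n F. \<forall>\<tau> \<tau>' v v'.
        del i = Some (\<tau>, v) \<and> del i' = Some (\<tau>', v') \<longrightarrow> v = v') \<and>
     (\<forall>y. j \<in> honest n F \<and> lin = Some y \<longrightarrow>
        (\<forall>i\<in>honest n F. \<exists>\<tau>. del i = Some (\<tau>, y))) \<and>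
     ((\<exists>i\<in>honest n F. del i \<noteq> None) \<longrightarrow> (\<forall>i\<in>honest n F. del i \<noteq> None))"

definition abba_props ::
  "nat \<Rightarrow> nat set \<Rightarrow> (nat \<Rightarrow> (nat \<times> bool) option) \<Rightarrow> (nat \<Rightarrow> (nat \<times> bool) option) \<Rightarrow> bool" where
  "abba_props n F inp out \<longleftrightarrow>
     ((\<forall>i\<in>honest n F. inp i \<noteq> None) \<longrightarrow> (\<forall>i\<in>honest n F. out i \<noteq> None)) \<and>
     (\<forall>i\<in>honest n F. \<forall>\<tau> b. out i = Some (\<tau>, b) \<longrightarrow>
        (\<forall>i'\<in>honest n F. \<exists>\<tau>'. out i' = Some (\<tau>', b))) \<and>
     (\<forall>b. (\<forall>i\<in>honest n F. \<exists>\<tau>. inp i = Some (\<tau>, b)) \<longrightarrow>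
        (\<forall>i\<in>honest n F. \<exists>\<tau>. out i = Some (\<tau>, b)))"

definition outs_by ::
  "nat \<Rightarrow> (nat \<Rightarrow> nat \<Rightarrow> (nat \<times> bool) option) \<Rightarrow> nat \<Rightarrow> nat \<Rightarrow> nat" where
  "outs_by n abba_out i \<tau> = card {k \<in> {1..n}. \<exists>\<tau>k bk. abba_out k i = Some (\<tau>k, bk) \<and> \<tau>k \<le> \<tau>}"

text \<open>Code of OciorABA* (steps (1)-(3)) for an honest Node_i with input w_i.
  Step (4) only produces the node's final output and does not affect RBC/ABBA.\<close>
definition honest_steps ::
  "nat \<Rightarrow> nat \<Rightarrow> nat \<Rightarrow> 'm \<Rightarrow> ('m \<Rightarrow> nat \<Rightarrow> 'v) \<Rightarrow> (nat \<Rightarrow> 'v option)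
   \<Rightarrow> (nat \<Rightarrow> nat \<Rightarrow> (nat \<times> 'v) option)
   \<Rightarrow> (nat \<Rightarrow> nat \<Rightarrow> (nat \<times> bool) option)
   \<Rightarrow> (nat \<Rightarrow> nat \<Rightarrow> (nat \<times> bool) option) \<Rightarrow> bool" where
  "honest_steps n t i wi enc rbc_lin rbc_del abba_inp abba_out \<longleftrightarrow>
     rbc_lin i = Some (enc wi i) \<and>
     (\<forall>j\<in>{1..n}. \<forall>\<tau> v. rbc_del j i = Some (\<tau>, v) \<longrightarrow>
        (\<exists>\<tau>' b. abba_inp j i = Some (\<tau>', b) \<and> \<tau>' \<le> \<tau>)) \<and>
     (\<forall>\<tau>. n - t \<le> outs_by n abba_out i \<tau> \<longrightarrow>
        (\<forall>j\<in>{1..n}. \<exists>\<tau>' b. abba_inp j i = Some (\<tau>', b) \<and> \<tau>' \<le> \<tau>)) \<and>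
     (\<forall>j\<in>{1..n}. \<forall>\<tau> b. abba_inp j i = Some (\<tau>, b) \<longrightarrow>
        ((\<exists>v. rbc_del j i = Some (\<tau>, v) \<and> b = (v = enc wi j)) \<or>
         (\<not> b \<and> n - t \<le> outs_by n abba_out i \<tau>)))"

end

theory Submission
  imports Defs
begin

theorem lemma2:
  fixes n t :: nat and F :: "nat set"
    and w :: "nat \<Rightarrow> 'm"
    and enc :: "'m \<Rightarrow> nat \<Rightarrow> 'v" and dec :: "(nat \<times> 'v) set \<Rightarrow> 'm"
    and rbc_lin :: "nat \<Rightarrow> 'v option"
    and rbc_del :: "nat \<Rightarrow> nat \<Rightarrow> (nat \<times> 'v) option"
    and abba_inp abba_out :: "nat \<Rightarrow> nat \<Rightarrow> (nat \<times> bool) option"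
    and j i0 \<tau>0 :: nat
  assumes n_ge: "n \<ge> 3 * t + 1"
    and F_sub: "F \<subseteq> {1..n}" and F_card: "card F \<le> t"
    and code: "erasure_code n t enc dec"
    and rbc: "\<forall>k\<in>{1..n}. rbc_props n F k (rbc_lin k) (\<lambda>i. rbc_del k i)"
    and abba: "\<forall>k\<in>{1..n}. abba_props n F (\<lambda>i. abba_inp k i) (\<lambda>i. abba_out k i)"
    and proto: "\<forall>i\<in>honest n F. honest_steps n t i (w i) enc rbc_lin rbc_del abba_inp abba_out"
    and j_range: "j \<in> {1..n}"
    and out1: "i0 \<in> honest n F" "abba_out j i0 = Some (\<tau>0, True)"
  shows "\<exists>y. (\<forall>i\<in>honest n F. \<exists>\<tau>. rbc_del j i = Some (\<tau>, y)) \<and>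
             (\<exists>i\<in>honest n F. enc (w i) j = y)"
proof -
  let ?H = "honest n F"
  have Hsub: "?H \<subseteq> {1..n}" by (auto simp: honest_def)
  have finH: "finite ?H" by (simp add: honest_def)
  have cardH: "card ?H \<ge> n - t"
  proof -
    have "card ?H = n - card F" unfolding honest_def
      using F_sub by (simp add: card_Diff_subset finite_subset)
    thus ?thesis using F_card by simp
  qed
  \<comment> \<open>honest leaders' RBCs deliver, so honest ABBAs get all inputs, hence outputs\<close>
  have outk: "\<forall>k\<in>?H. \<forall>i\<in>?H. abba_out k i \<noteq> None"
  proof (intro ballI)
    fix k i assume k: "k \<in> ?H" and i: "i \<in> ?H"
    have kr: "k \<in> {1..n}" using k Hsub by auto
    have lin: "rbc_lin k = Some (enc (w k) k)" using proto k by (simp add: honest_steps_def)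
    have del: "\<forall>i'\<in>?H. \<exists>\<tau>. rbc_del k i' = Some (\<tau>, enc (w k) k)"
      using rbc kr k lin unfolding rbc_props_def by blast
    have inp: "\<forall>i'\<in>?H. abba_inp k i' \<noteq> None"
    proof
      fix i' assume i': "i' \<in> ?H"
      then obtain \<tau> where "rbc_del k i' = Some (\<tau>, enc (w k) k)" using del by blast
      thus "abba_inp k i' \<noteq> None" using proto i' kr unfolding honest_steps_def by fastforce
    qed
    thus "abba_out k i \<noteq> None" using abba kr i unfolding abba_props_def by blast
  qed
  have inpj: "\<forall>i\<in>?H. abba_inp j i \<noteq> None"
  proof
    fix i assume i: "i \<in> ?H"
    define T where "T = (\<lambda>k. fst (the (abba_out k i)))"
    define M where "M = Max (T ` ?H)"
    have sub: "?H \<subseteq> {k \<in> {1..n}. \<exists>\<tau>k bk. abba_out k i = Some (\<tau>k, bk) \<and> \<tau>k \<le> M}"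
    proof
      fix k assume k: "k \<in> ?H"
      obtain \<tau>k bk where e: "abba_out k i = Some (\<tau>k, bk)" using outk k i by fastforce
      have "T k \<le> M" unfolding M_def using finH k by simp
      hence "\<tau>k \<le> M" using e by (simp add: T_def)
      thus "k \<in> {k \<in> {1..n}. \<exists>\<tau>k bk. abba_out k i = Some (\<tau>k, bk) \<and> \<tau>k \<le> M}"
        using e k Hsub by auto
    qed
    have "card ?H \<le> outs_by n abba_out i M" unfolding outs_by_def
      by (rule card_mono[OF _ sub]) simp
    hence "n - t \<le> outs_by n abba_out i M" using cardH by simp
    thus "abba_inp j i \<noteq> None" using proto i j_range unfolding honest_steps_def by fastforce
  qed
  have "\<exists>i\<in>?H. \<exists>\<tau>. abba_inp j i = Some (\<tau>, True)"
  proof (rule ccontr)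
    assume "\<not> ?thesis"
    hence "\<forall>i\<in>?H. \<exists>\<tau>. abba_inp j i = Some (\<tau>, False)" using inpj by fastforce
    hence "\<forall>i\<in>?H. \<exists>\<tau>. abba_out j i = Some (\<tau>, False)" using abba j_range
      unfolding abba_props_def by blast
    thus False using out1 by fastforce
  qed
  then obtain i \<tau> where i: "i \<in> ?H" and e: "abba_inp j i = Some (\<tau>, True)" by blast
  then obtain v where d: "rbc_del j i = Some (\<tau>, v)" and ve: "v = enc (w i) j"
    using proto j_range unfolding honest_steps_def by fastforce
  have rp: "rbc_props n F j (rbc_lin j) (\<lambda>i. rbc_del j i)" using rbc j_range by blast
  have all: "\<forall>i'\<in>?H. rbc_del j i' \<noteq> None" using rp i d unfolding rbc_props_def by blast
  have "\<forall>i'\<in>?H. \<exists>\<tau>'. rbc_del j i' = Some (\<tau>', v)"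
  proof
    fix i' assume i': "i' \<in> ?H"
    then obtain \<tau>' v' where d': "rbc_del j i' = Some (\<tau>', v')" using all by fastforce
    have "v' = v" using rp i i' d d' unfolding rbc_props_def by blast
    thus "\<exists>\<tau>'. rbc_del j i' = Some (\<tau>', v)" using d' by blast
  qed
  thus ?thesis using i ve by blast
qed

end
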